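(* Let $\Lambda=\{\lambda_1,\lambda_2,\lambda_3,\lambda_4\}$ be a multiset of non-zero real numbers such that $1\in\Lambda$, $|\lambda_j|\le1$ for all $j$, and $\sum_{j=1}^4\lambda_j\ge0$. Then there exists a completely positive trace-preserving linear map $T:\mathcal{M}_4(\mathbb{C})\to\mathcal{M}_4(\mathbb{C})$ with $\mathrm{spec}(T)\setminus\{0\}=\Lambda$.
   Context: $\mathrm{spec}(T)$ is the spectrum of $T$ as an operator on $\mathcal{M}_4(\mathbb{C})$ counted with algebraic multiplicity; $\mathrm{spec}(T)\setminus\{0\}$ removes all zeros. Completely positive: $T\otimes\mathrm{id}$ maps positive semidefinite matrices to positive semidefinite ones; trace-preserving: $\mathrm{tr}[T(X)]=\mathrm{tr}[X]$. *)

theory Defs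
  imports "Jordan_Normal_Form.Char_Poly" "HOL-Library.Multiset"
begin

definition psd :: "nat \<Rightarrow> complex mat \<Rightarrow> bool" where
  "psd n A \<longleftrightarrow> A \<in> carrier_mat n n \<and>
     (\<forall>v \<in> carrier_vec n.
        let q = (\<Sum>i<n. \<Sum>j<n. cnj (v $ i) * A $$ (i, j) * v $ j)
        in Im q = 0 \<and> Re q \<ge> 0)"

definition lin_map4 :: "(complex mat \<Rightarrow> complex mat) \<Rightarrow> bool" where
  "lin_map4 T \<longleftrightarrow>
     (\<forall>A \<in> carrier_mat 4 4. T A \<in> carrier_mat 4 4) \<and>
     (\<forall>A \<in> carrier_mat 4 4. \<forall>B \<in> carrier_mat 4 4. T (A + B) = T A + T B) \<and>
     (\<forall>A \<in> carrier_mat 4 4. \<forall>c. T (c \<cdot>\<^sub>m A) = c \<cdot>\<^sub>m T A)"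

definition block4 :: "complex mat \<Rightarrow> nat \<Rightarrow> nat \<Rightarrow> complex mat" where
  "block4 X k l = mat 4 4 (\<lambda>(i, j). X $$ (4 * k + i, 4 * l + j))"

text \<open>The ampliation of T to M_n(M_4(C)) = M_n \<otimes> M_4(C) (apply T blockwise).\<close>
definition ampl :: "nat \<Rightarrow> (complex mat \<Rightarrow> complex mat) \<Rightarrow> complex mat \<Rightarrow> complex mat" where
  "ampl n T X = mat (4 * n) (4 * n)
     (\<lambda>(a, b). T (block4 X (a div 4) (b div 4)) $$ (a mod 4, b mod 4))"

definition completely_positive4 :: "(complex mat \<Rightarrow> complex mat) \<Rightarrow> bool" where
  "completely_positive4 T \<longleftrightarrow> (\<forall>n X. psd (4 * n) X \<longrightarrow> psd (4 * n) (ampl n T X))"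

definition trace_preserving4 :: "(complex mat \<Rightarrow> complex mat) \<Rightarrow> bool" where
  "trace_preserving4 T \<longleftrightarrow> (\<forall>A \<in> carrier_mat 4 4. (\<Sum>i<4. T A $$ (i, i)) = (\<Sum>i<4. A $$ (i, i)))"

definition unit4 :: "nat \<Rightarrow> nat \<Rightarrow> complex mat" where
  "unit4 k l = mat 4 4 (\<lambda>(i, j). if i = k \<and> j = l then 1 else 0)"

text \<open>Matrix (16 x 16) of T w.r.t. the basis E_00, E_01, ..., E_33 (index 4*i+j).\<close>
definition rep_mat4 :: "(complex mat \<Rightarrow> complex mat) \<Rightarrow> complex mat" where
  "rep_mat4 T = mat 16 16 (\<lambda>(a, b). T (unit4 (b div 4) (b mod 4)) $$ (a div 4, a mod 4))"

definition spec_mset4 :: "(complex mat \<Rightarrow> complex mat) \<Rightarrow> complex multiset" where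
  "spec_mset4 T = (THE M. char_poly (rep_mat4 T) = (\<Prod>a\<in>#M. [:- a, 1:]))"

end

theory Submission
  imports Defs
begin


definition chan :: "(nat \<Rightarrow> nat \<Rightarrow> real) \<Rightarrow> complex mat \<Rightarrow> complex mat" where
  "chan s X = mat 4 4 (\<lambda>(i,j). if i = j then (\<Sum>k<4. complex_of_real (s i k) * X $$ (k,k)) else 0)"

lemma chan_lin: "lin_map4 (chan s)"
  unfolding lin_map4_def
proof (intro conjI ballI allI)
  fix A :: "complex mat" assume "A \<in> carrier_mat 4 4" then show "chan s A \<in> carrier_mat 4 4" by (simp add: chan_def)
next
  fix A B :: "complex mat" assume A: "A \<in> carrier_mat 4 4" and B: "B \<in> carrier_mat 4 4"
  show "chan s (A + B) = chan s A + chan s B"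
    by (rule eq_matI) (use A B in \<open>auto simp: chan_def sum.distrib algebra_simps\<close>)
next
  fix A :: "complex mat" and c assume A: "A \<in> carrier_mat 4 4"
  show "chan s (c \<cdot>\<^sub>m A) = c \<cdot>\<^sub>m chan s A"
    by (rule eq_matI) (use A in \<open>auto simp: chan_def sum_distrib_left algebra_simps\<close>)
qed

lemma chan_tp:
  assumes "\<And>j. j < 4 \<Longrightarrow> (\<Sum>i<4. s i j) = 1"
  shows "trace_preserving4 (chan s)"
  unfolding trace_preserving4_def
proof
  fix A :: "complex mat" assume "A \<in> carrier_mat 4 4"
  have "(\<Sum>i<4. chan s A $$ (i, i)) = (\<Sum>i<4. \<Sum>k<4. complex_of_real (s i k) * A $$ (k,k))"
    by (simp add: chan_def)
  also have "\<dots> = (\<Sum>k<4. complex_of_real (\<Sum>i<4. s i k) * A $$ (k,k))"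
    by (subst sum.swap) (simp add: sum_distrib_right)
  also have "\<dots> = (\<Sum>k<4. A $$ (k,k))" using assms by simp
  finally show "(\<Sum>i<4. chan s A $$ (i, i)) = (\<Sum>i<4. A $$ (i, i))" .
qed

lemma proots_lin: "proots (\<Prod>a\<in>#M. [:- a, 1:]) = (M :: complex multiset)"
  proof (induction M)
  case (add x M)
  have "(\<Prod>a\<in>#add_mset x M. [:- a, 1:]) = [:- x, 1:] * (\<Prod>a\<in>#M. [:- a, 1:])" by simp
  moreover have "(\<Prod>a\<in>#M. [:- a, 1:]) \<noteq> 0" by (auto simp: prod_mset_zero_iff)
  moreover have "proots ([:- x, 1:] * (\<Prod>a\<in>#M. [:- a, 1:])) = proots [:- x, 1:] + proots (\<Prod>a\<in>#M. [:- a, 1:])"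
    by (rule proots_mult) (use \<open>(\<Prod>a\<in>#M. [:- a, 1:]) \<noteq> 0\<close> in auto)
  moreover have "proots [:- x, 1:] = {#x#}" using proots_linear_factor[of "-x"] by simp
  ultimately show ?case using add by (simp del: mult_pCons_left prod_mset.add_mset)
qed simp

lemma spec_eq:
  assumes "char_poly (rep_mat4 T) = (\<Prod>a\<in>#M. [:- a, 1:])"
  shows "spec_mset4 T = M"
  unfolding spec_mset4_def
proof (rule the_equality)
  show "char_poly (rep_mat4 T) = (\<Prod>a\<in>#M. [:- a, 1:])" by fact
  fix N assume "char_poly (rep_mat4 T) = (\<Prod>a\<in>#N. [:- a, 1:])"
  then have "proots (\<Prod>a\<in>#N. [:- a, 1:]) = proots (\<Prod>a\<in>#M. [:- a, 1:])" using assms by simp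
  then show "N = M" by (simp add: proots_lin)
qed

lemma sum4: "(\<Sum>a<4*(n::nat). f a) = (\<Sum>m<n. \<Sum>i<4. f (4*m+i))"
proof (induction n)
  case (Suc n)
  have e: "4 * Suc n = Suc (Suc (Suc (Suc (4*n))))" by simp
  have "(\<Sum>a<4 * Suc n. f a) = (\<Sum>a<4*n. f a) + (\<Sum>i<4. f (4*n+i))"
    unfolding e by (simp add: numeral_eq_Suc add_ac)
  then show ?case using Suc by simp
qed simp

definition qf :: "nat \<Rightarrow> complex mat \<Rightarrow> complex vec \<Rightarrow> complex" where
  "qf N A v = (\<Sum>i<N. \<Sum>j<N. cnj (v $ i) * A $$ (i, j) * v $ j)"

lemma psd_qf: "psd N A \<Longrightarrow> v \<in> carrier_vec N \<Longrightarrow> Im (qf N A v) = 0 \<and> Re (qf N A v) \<ge> 0"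
  unfolding psd_def qf_def Let_def by blast

lemma ampl_entry:
  assumes "m < n" "m' < n" "i < 4" "i' < 4"
  shows "ampl n (chan s) X $$ (4*m+i, 4*m'+i') =
    (if i = i' then (\<Sum>k<4. complex_of_real (s i k) * X $$ (4*m+k, 4*m'+k)) else 0)"
proof -
  have a: "4*m+i < 4*n" "4*m'+i' < 4*n" using assms by linarith+
  show ?thesis using assms a by (simp add: ampl_def chan_def block4_def)
qed

lemma delta2: "(k::nat) < 4 \<Longrightarrow> (\<Sum>m<n. \<Sum>j<4::nat. \<Sum>m'<n. \<Sum>j'<4::nat. (if j = k then (if j' = k then (f m m' :: complex) else 0) else 0)) = (\<Sum>m<n. \<Sum>m'<n. f m m')"
proof -
  assume k: "k < 4"
  have "\<And>m. (\<Sum>j<4::nat. \<Sum>m'<n. \<Sum>j'<4::nat. (if j = k then (if j' = k then (f m m' :: complex) else 0) else 0)) = (\<Sum>j<4::nat. if j = k then (\<Sum>m'<n. \<Sum>j'<4::nat. (if j' = k then (f m m' :: complex) else 0)) else 0)"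
    by (intro sum.cong refl) auto
  also have "\<And>m. \<dots>m = (\<Sum>m'<n. \<Sum>j'<4::nat. (if j' = k then (f m m' :: complex) else 0))" using k by (subst sum.delta) auto
  finally show ?thesis using k by (simp add: sum.delta)
qed

lemma swap3: "(\<Sum>m\<in>A. \<Sum>j\<in>B. \<Sum>m'\<in>C. \<Sum>k\<in>D. f m j m' k) = (\<Sum>j\<in>B. \<Sum>k\<in>D. \<Sum>m\<in>A. \<Sum>m'\<in>C. f m j m' k)"
proof -
  have "(\<Sum>m\<in>A. \<Sum>j\<in>B. \<Sum>m'\<in>C. \<Sum>k\<in>D. f m j m' k) = (\<Sum>j\<in>B. \<Sum>m\<in>A. \<Sum>m'\<in>C. \<Sum>k\<in>D. f m j m' k)"
    by (rule sum.swap)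
  also have "\<dots> = (\<Sum>j\<in>B. \<Sum>m\<in>A. \<Sum>k\<in>D. \<Sum>m'\<in>C. f m j m' k)"
    by (intro sum.cong refl sum.swap)
  also have "\<dots> = (\<Sum>j\<in>B. \<Sum>k\<in>D. \<Sum>m\<in>A. \<Sum>m'\<in>C. f m j m' k)"
    by (intro sum.cong refl sum.swap)
  finally show ?thesis .
qed

lemma chan_cp:
  assumes nn: "\<And>i k. i < 4 \<Longrightarrow> k < 4 \<Longrightarrow> s i k \<ge> 0"
  shows "completely_positive4 (chan s)"
  unfolding completely_positive4_def
proof (intro allI impI)
  fix n X assume X: "psd (4*n) X"
  show "psd (4*n) (ampl n (chan s) X)"
    unfolding psd_def Let_def
  proof (intro conjI ballI)
    show "ampl n (chan s) X \<in> carrier_mat (4 * n) (4 * n)" by (simp add: ampl_def)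
    fix v :: "complex vec" assume v: "v \<in> carrier_vec (4*n)"
    define w where "w i k = vec (4*n) (\<lambda>g. if g mod 4 = k then v $ (4*(g div 4)+i) else 0)" for i k
    define Q where "Q i k = qf (4*n) X (w i k)" for i k
    have Qp: "Im (Q i k) = 0 \<and> Re (Q i k) \<ge> 0" for i k
      unfolding Q_def by (rule psd_qf[OF X]) (simp add: w_def)
    have went: "w i k $ (4*m+j) = (if j = k then v $ (4*m+i) else 0)" if "m < n" "j < 4" for i k m j
    proof -
      have "4*m+j < 4*n" using that by linarith
      then show ?thesis using that by (simp add: w_def)
    qed
    have Qeq: "Q i k = (\<Sum>m<n. \<Sum>m'<n. cnj (v$(4*m+i)) * X$$(4*m+k,4*m'+k) * v$(4*m'+i))" if "k < 4" for i k
    proof -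
      have "Q i k = (\<Sum>m<n. \<Sum>j<4. \<Sum>m'<n. \<Sum>j'<4. cnj (w i k $ (4*m+j)) * X$$(4*m+j,4*m'+j') * w i k $ (4*m'+j'))"
        unfolding Q_def qf_def sum4 by simp
      also have "\<dots> = (\<Sum>m<n. \<Sum>j<4. \<Sum>m'<n. \<Sum>j'<4. (if j = k then (if j' = k then cnj (v$(4*m+i)) * X$$(4*m+k,4*m'+k) * v$(4*m'+i) else 0) else 0))"
        by (intro sum.cong refl) (simp add: went)
      also have "\<dots> = (\<Sum>m<n. \<Sum>m'<n. cnj (v$(4*m+i)) * X$$(4*m+k,4*m'+k) * v$(4*m'+i))"
        by (rule delta2[OF that])
      finally show ?thesis .
    qed
    have "(\<Sum>i<4*n. \<Sum>j<4*n. cnj (v $ i) * ampl n (chan s) X $$ (i, j) * v $ j)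
      = (\<Sum>m<n. \<Sum>j<4. \<Sum>m'<n. \<Sum>j'<4. cnj (v $ (4*m+j)) * ampl n (chan s) X $$ (4*m+j, 4*m'+j') * v $ (4*m'+j'))"
      unfolding sum4 by simp
    also have "\<dots> = (\<Sum>m<n. \<Sum>j<4. \<Sum>m'<n. \<Sum>j'<4. (if j = j' then cnj (v $ (4*m+j)) * (\<Sum>k<4. complex_of_real (s j k) * X $$ (4*m+k, 4*m'+k)) * v $ (4*m'+j) else 0))"
      by (intro sum.cong refl) (simp add: ampl_entry)
    also have "\<dots> = (\<Sum>m<n. \<Sum>j<4. \<Sum>m'<n. cnj (v $ (4*m+j)) * (\<Sum>k<4. complex_of_real (s j k) * X $$ (4*m+k, 4*m'+k)) * v $ (4*m'+j))"
      by (intro sum.cong refl) (simp add: sum.delta)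
    also have "\<dots> = (\<Sum>m<n. \<Sum>j<4. \<Sum>m'<n. \<Sum>k<4. complex_of_real (s j k) * (cnj (v $ (4*m+j)) * X $$ (4*m+k, 4*m'+k) * v $ (4*m'+j)))"
      by (intro sum.cong refl) (simp add: sum_distrib_left sum_distrib_right algebra_simps)
    also have "\<dots> = (\<Sum>j<4. \<Sum>k<4. \<Sum>m<n. \<Sum>m'<n. complex_of_real (s j k) * (cnj (v $ (4*m+j)) * X $$ (4*m+k, 4*m'+k) * v $ (4*m'+j)))"
      by (rule swap3)
    also have "\<dots> = (\<Sum>j<4. \<Sum>k<4. complex_of_real (s j k) * Q j k)"
      by (intro sum.cong refl) (simp add: Qeq sum_distrib_left)
    finally have eq: "(\<Sum>i<4*n. \<Sum>j<4*n. cnj (v $ i) * ampl n (chan s) X $$ (i, j) * v $ j) = (\<Sum>j<4. \<Sum>k<4. complex_of_real (s j k) * Q j k)" .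
    show "Im (\<Sum>i<4*n. \<Sum>j<4*n. cnj (v $ i) * ampl n (chan s) X $$ (i, j) * v $ j) = 0"
      unfolding eq using Qp by (simp add: Im_sum)
    show "0 \<le> Re (\<Sum>i<4*n. \<Sum>j<4*n. cnj (v $ i) * ampl n (chan s) X $$ (i, j) * v $ j)"
      unfolding eq Re_sum using Qp nn by (auto intro!: sum_nonneg)
  qed
qed

definition emb :: "complex \<Rightarrow> complex mat \<Rightarrow> complex mat" where
  "emb c A = mat 16 16 (\<lambda>(a,b). if a div 4 = a mod 4 \<and> b div 4 = b mod 4 then A $$ (a div 4, b div 4)
      else if a = b then c else 0)"

lemma emb_carrier: "emb c A \<in> carrier_mat 16 16" and emb_dim: "dim_row (emb c A) = 16" "dim_col (emb c A) = 16"
  by (simp_all add: emb_def)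

lemma less16: "(a::nat) < 16 \<Longrightarrow> a \<in> {0,1,2,3,4,5,6,7,8,9,10,11,12,13,14,15}"
proof -
  have "{..<16::nat} = {0,1,2,3,4,5,6,7,8,9,10,11,12,13,14,15}" by (simp add: lessThan_nat_numeral lessThan_Suc insert_commute)
  then show "(a::nat) < 16 \<Longrightarrow> a \<in> {0,1,2,3,4,5,6,7,8,9,10,11,12,13,14,15}" by blast
qed

lemma emb_sum:
  assumes "a < 16"
  shows "(\<Sum>k<16. emb c A $$ (a,k) * g k) = (if a div 4 = a mod 4 then (\<Sum>i<4. A $$ (a div 4, i) * g (5*i)) else c * g a)"
proof -
  have s16: "(\<Sum>k<16. f k) = f 0 + f 1 + f 2 + f 3 + f 4 + f 5 + f 6 + f 7 + f 8 + f 9 + f 10 + f 11 + f 12 + f 13 + f 14 + f 15" for f :: "nat \<Rightarrow> complex"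
    by (simp add: lessThan_nat_numeral)
  have s4: "(\<Sum>k<4. f k) = f 0 + f 1 + f 2 + f 3" for f :: "nat \<Rightarrow> complex"
    by (simp add: lessThan_nat_numeral)
  show ?thesis unfolding s16 s4 using less16[OF assms] by (auto simp: emb_def)
qed

lemma s4: "(\<Sum>k<4. f k) = f 0 + f 1 + f 2 + f 3" for f :: "nat \<Rightarrow> 'a::comm_monoid_add"
  by (simp add: lessThan_nat_numeral add_ac)

lemma emb_mult:
  assumes A: "A \<in> carrier_mat 4 4" and B: "B \<in> carrier_mat 4 4"
  shows "emb c A * emb d B = emb (c*d) (A*B)"
proof (rule eq_matI)
  show "dim_row (emb c A * emb d B) = dim_row (emb (c*d) (A*B))" by (simp add: emb_def)
  show "dim_col (emb c A * emb d B) = dim_col (emb (c*d) (A*B))" by (simp add: emb_def)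
  fix a b assume "a < dim_row (emb (c*d) (A*B))" "b < dim_col (emb (c*d) (A*B))"
  then have ab: "a < 16" "b < 16" by (auto simp: emb_def)
  have "(emb c A * emb d B) $$ (a,b) = (\<Sum>k<16. emb c A $$ (a,k) * emb d B $$ (k,b))"
    using ab by (simp add: emb_def scalar_prod_def lessThan_atLeast0)
  also have "\<dots> = (if a div 4 = a mod 4 then (\<Sum>i<4. A $$ (a div 4, i) * emb d B $$ (5*i,b)) else c * emb d B $$ (a,b))"
    by (rule emb_sum[OF ab(1)])
  also have "\<dots> = emb (c*d) (A*B) $$ (a,b)"
  proof (cases "a div 4 = a mod 4")
    case True
    have "a div 4 < 4" using ab by simp
    moreover have "b div 4 < 4" using ab by simp
    ultimately show ?thesis using True ab A B
      unfolding s4 by (auto simp: emb_def scalar_prod_def lessThan_atLeast0[symmetric] s4)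
  next
    case False
    then show ?thesis using ab by (auto simp: emb_def)
  qed
  finally show "(emb c A * emb d B) $$ (a,b) = emb (c*d) (A*B) $$ (a,b)" .
qed

lemma emb_one: "emb 1 (1\<^sub>m 4) = 1\<^sub>m 16"
proof (rule eq_matI)
  fix a b assume "a < dim_row (1\<^sub>m 16 :: complex mat)" "b < dim_col (1\<^sub>m 16 :: complex mat)"
  then have ab: "a < 16" "b < 16" by auto
  have "a = 4*(a div 4) + a mod 4" "b = 4*(b div 4) + b mod 4" by simp_all
  then have "a div 4 = a mod 4 \<Longrightarrow> b div 4 = b mod 4 \<Longrightarrow> a div 4 = b div 4 \<Longrightarrow> a = b" by metis
  then show "emb 1 (1\<^sub>m 4) $$ (a,b) = (1\<^sub>m 16 :: complex mat) $$ (a,b)"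
    using ab by (auto simp: emb_def)
qed (auto simp: emb_def)

lemma emb_ut:
  assumes "upper_triangular U" "U \<in> carrier_mat 4 4"
  shows "upper_triangular (emb 0 U)"
  unfolding upper_triangular_def
proof (intro allI impI)
  fix a b assume "a < dim_row (emb 0 U)" "b < a"
  then have ab: "a < 16" "b < a" by (auto simp: emb_def)
  have "a = 4*(a div 4) + a mod 4" "b = 4*(b div 4) + b mod 4" by simp_all
  then have "a div 4 = a mod 4 \<Longrightarrow> b div 4 = b mod 4 \<Longrightarrow> b div 4 < a div 4" using ab(2) by linarith
  then show "emb 0 U $$ (a,b) = 0" using ab assms unfolding upper_triangular_def by (auto simp: emb_def)
qed

lemma rep_chan: "rep_mat4 (chan s) = emb 0 (mat 4 4 (\<lambda>(i,j). complex_of_real (s i j)))"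
proof (rule eq_matI)
  fix a b assume "a < dim_row (emb 0 (mat 4 4 (\<lambda>(i,j). complex_of_real (s i j))))" "b < dim_col (emb 0 (mat 4 4 (\<lambda>(i,j). complex_of_real (s i j))))"
  then have ab: "a < 16" "b < 16" by (auto simp: emb_def)
  then have lt: "a div 4 < 4" "b div 4 < 4" "a mod 4 < 4" "b mod 4 < 4" by auto
  have u: "unit4 (b div 4) (b mod 4) $$ (k,k) = (if k = b div 4 then (if b div 4 = b mod 4 then 1 else 0) else 0)" if "k < 4" for k
    using that lt by (auto simp: unit4_def)
  have "(\<Sum>k<4. complex_of_real (s i k) * unit4 (b div 4) (b mod 4) $$ (k,k))
      = (\<Sum>k<4. if k = b div 4 then complex_of_real (s i k) * (if b div 4 = b mod 4 then 1 else 0) else 0)" for i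
    by (intro sum.cong refl) (simp add: u)
  also have "\<dots> i = complex_of_real (s i (b div 4)) * (if b div 4 = b mod 4 then 1 else 0)" for i
    using lt by (subst sum.delta) auto
  finally have S: "(\<Sum>k<4. complex_of_real (s i k) * unit4 (b div 4) (b mod 4) $$ (k,k)) = complex_of_real (s i (b div 4)) * (if b div 4 = b mod 4 then 1 else 0)" for i .
  have "rep_mat4 (chan s) $$ (a,b) = (if a div 4 = a mod 4 then (\<Sum>k<4. complex_of_real (s (a div 4) k) * unit4 (b div 4) (b mod 4) $$ (k,k)) else 0)"
    using ab lt by (simp add: rep_mat4_def chan_def)
  also have "\<dots> = (if a div 4 = a mod 4 then complex_of_real (s (a div 4) (b div 4)) * (if b div 4 = b mod 4 then 1 else 0) else 0)"
    by (simp only: S)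
  also have "\<dots> = emb 0 (mat 4 4 (\<lambda>(i,j). complex_of_real (s i j))) $$ (a,b)"
    using ab lt by (auto simp: emb_def)
  finally show "rep_mat4 (chan s) $$ (a,b) = emb 0 (mat 4 4 (\<lambda>(i,j). complex_of_real (s i j))) $$ (a,b)" .
qed (auto simp: emb_def rep_mat4_def)

lemma diag_emb:
  assumes "U $$ (0,0) \<noteq> 0" "U $$ (1,1) \<noteq> 0" "U $$ (2,2) \<noteq> 0" "U $$ (3,3) \<noteq> 0"
  shows "filter_mset (\<lambda>z. z \<noteq> 0) (mset (diag_mat (emb 0 U))) = {#U$$(0,0), U$$(1,1), U$$(2,2), U$$(3,3)#}"
proof -
  have "[0..<16] = [0,1,2,3,4,5,6,7,8,9,10,11,12,13,14,15::nat]" by (simp add: upt_rec)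
  then show ?thesis using assms by (simp add: diag_mat_def emb_def)
qed

lemma realize:
  assumes nn: "\<And>i k. i < 4 \<Longrightarrow> k < 4 \<Longrightarrow> s i k \<ge> 0"
    and cs: "\<And>j. j < 4 \<Longrightarrow> (\<Sum>i<4. s i j) = 1"
    and P: "P \<in> carrier_mat 4 4" and U: "U \<in> carrier_mat 4 4" and Q: "Q \<in> carrier_mat 4 4"
    and PQ: "P * Q = 1\<^sub>m 4" and QP: "Q * P = 1\<^sub>m 4" and ut: "upper_triangular U"
    and S: "mat 4 4 (\<lambda>(i,j). complex_of_real (s i j)) = P * U * Q"
    and nz: "U $$ (0,0) \<noteq> 0" "U $$ (1,1) \<noteq> 0" "U $$ (2,2) \<noteq> 0" "U $$ (3,3) \<noteq> 0"
  shows "\<exists>T. lin_map4 T \<and> completely_positive4 T \<and> trace_preserving4 T \<and>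
     filter_mset (\<lambda>z. z \<noteq> 0) (spec_mset4 T) = {#U$$(0,0), U$$(1,1), U$$(2,2), U$$(3,3)#}"
proof (intro exI conjI)
  show "lin_map4 (chan s)" by (rule chan_lin)
  show "completely_positive4 (chan s)" by (rule chan_cp) (rule nn)
  show "trace_preserving4 (chan s)" by (rule chan_tp) (rule cs)
  have PU: "P * U \<in> carrier_mat 4 4" using P U by simp
  have e: "emb 0 (P * U * Q) = emb 1 P * emb 0 U * emb 1 Q"
    using emb_mult[OF P U, of 1 0] emb_mult[OF PU Q, of 0 1] by simp
  have c3: "emb 1 P * emb 0 U * emb 1 Q \<in> carrier_mat 16 16" using emb_carrier by (metis mult_carrier_mat)
  have w: "similar_mat_wit (emb 0 (P * U * Q)) (emb 0 U) (emb 1 P) (emb 1 Q)"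
    unfolding similar_mat_wit_def Let_def
    using emb_mult[OF P Q, of 1 1] emb_mult[OF Q P, of 1 1] PQ QP
    by (simp add: emb_one emb_carrier emb_dim e c3)
  have "char_poly (rep_mat4 (chan s)) = char_poly (emb 0 U)"
    unfolding rep_chan S by (rule char_poly_similar) (use w similar_mat_def in blast)
  also have "\<dots> = (\<Prod>a\<leftarrow>diag_mat (emb 0 U). [:- a, 1:])"
    by (rule char_poly_upper_triangular[of _ 16]) (auto simp: emb_carrier intro: emb_ut[OF ut U])
  also have "\<dots> = (\<Prod>a\<in>#mset (diag_mat (emb 0 U)). [:- a, 1:])"
    by (simp add: prod_mset_prod_list[symmetric])
  finally have "spec_mset4 (chan s) = mset (diag_mat (emb 0 U))" by (rule spec_eq)
  then show "filter_mset (\<lambda>z. z \<noteq> 0) (spec_mset4 (chan s)) = {#U$$(0,0), U$$(1,1), U$$(2,2), U$$(3,3)#}"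
    using diag_emb[OF nz] by simp
qed



lemma less4: "(i::nat) < 4 \<Longrightarrow> i = 0 \<or> i = 1 \<or> i = 2 \<or> i = 3" by auto

definition M4 :: "'a list list \<Rightarrow> 'a mat" where
  "M4 xs = mat 4 4 (\<lambda>(i,j). xs ! i ! j)"

lemma M4_carrier: "M4 xs \<in> carrier_mat 4 4" by (simp add: M4_def)

lemma M4_eqI:
  assumes "\<And>i j. i \<in> {0,1,2,3} \<Longrightarrow> j \<in> {0,1,2,3} \<Longrightarrow> A $$ (i,j) = M4 xs $$ (i,j)" "A \<in> carrier_mat 4 4"
  shows "A = M4 xs"
  by (rule eq_matI) (use assms less4 in \<open>auto simp: M4_def\<close>)

lemma M4_mult: "(M4 xs * M4 ys) $$ (i,j) = (if i < 4 \<and> j < 4 then (\<Sum>k<4. xs ! i ! k * ys ! k ! j) else (M4 xs * M4 ys) $$ (i,j))"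
  by (auto simp: M4_def scalar_prod_def lessThan_atLeast0)

lemma M4_mult_eq:
  assumes "\<And>i j. i \<in> {0,1,2,3} \<Longrightarrow> j \<in> {0,1,2,3} \<Longrightarrow> (\<Sum>k<4. xs!i!k * ys!k!j) = zs!i!j"
  shows "M4 xs * M4 ys = M4 (zs :: 'a :: comm_ring_1 list list)"
proof (rule eq_matI)
  fix i j assume "i < dim_row (M4 zs)" "j < dim_col (M4 zs)"
  then have ij: "i < 4" "j < 4" by (auto simp: M4_def)
  then have "(M4 xs * M4 ys) $$ (i,j) = (\<Sum>k<4. xs!i!k * ys!k!j)"
    by (simp add: M4_def scalar_prod_def lessThan_atLeast0)
  also have "\<dots> = zs!i!j" using assms less4[OF ij(1)] less4[OF ij(2)] by auto
  finally show "(M4 xs * M4 ys) $$ (i,j) = M4 zs $$ (i,j)" using ij by (simp add: M4_def)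
qed (auto simp: M4_def)

lemma M4_one: "M4 [[1,0,0,0],[0,1,0,0],[0,0,1,0],[0,0,0,1]] = (1\<^sub>m 4 :: 'a::comm_ring_1 mat)"
  by (rule eq_matI) (auto simp: M4_def dest!: less4)

lemma caseB:
  fixes a b c :: real
  assumes "-1 \<le> a" "a \<le> 1" "c \<le> b" "b \<le> 1" "0 \<le> b + c" "a \<noteq> 0" "b \<noteq> 0" "c \<noteq> 0"
  shows "\<exists>T. lin_map4 T \<and> completely_positive4 T \<and> trace_preserving4 T \<and>
     filter_mset (\<lambda>z. z \<noteq> 0) (spec_mset4 T) = {#1, complex_of_real a, complex_of_real b, complex_of_real c#}"
proof -
  define p where "p = (1+a)/2"
  define q where "q = (1-a)/2"
  define x where "x = (b+c)/2"
  define y where "y = (b-c)/2"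
  define r where "r = 1 - b"
  define s where "s i j = [[p,q,r,r],[q,p,0,0],[0,0,x,y],[0,0,y,x]] ! i ! j" for i j
  define P :: "complex mat" where "P = M4 [[1,1,0,0],[1,-1,0,0],[0,0,1,1],[0,0,1,-1]]"
  define Q :: "complex mat" where "Q = M4 [[1/2,1/2,0,0],[1/2,-1/2,0,0],[0,0,1/2,1/2],[0,0,1/2,-1/2]]"
  define U :: "complex mat" where "U = M4 [[1,0,of_real r,0],[0,of_real a,of_real r,0],[0,0,of_real b,0],[0,0,0,of_real c]]"
  have "\<exists>T. lin_map4 T \<and> completely_positive4 T \<and> trace_preserving4 T \<and>
     filter_mset (\<lambda>z. z \<noteq> 0) (spec_mset4 T) = {#U$$(0,0), U$$(1,1), U$$(2,2), U$$(3,3)#}"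
  proof (rule realize[of s P U Q])
    show "s i k \<ge> 0" if "i < 4" "k < 4" for i k
      using less4[OF that(1)] less4[OF that(2)] assms by (auto simp: s_def p_def q_def x_def y_def r_def)
    show "(\<Sum>i<4. s i j) = 1" if "j < 4" for j
      using less4[OF that] by (auto simp: s4 s_def p_def q_def x_def y_def r_def field_simps)
    show "P \<in> carrier_mat 4 4" "U \<in> carrier_mat 4 4" "Q \<in> carrier_mat 4 4"
      by (simp_all add: P_def Q_def U_def M4_carrier)
    show "P * Q = 1\<^sub>m 4" unfolding P_def Q_def M4_one[symmetric]
      by (rule M4_mult_eq) (auto simp: s4)
    show "Q * P = 1\<^sub>m 4" unfolding P_def Q_def M4_one[symmetric]
      by (rule M4_mult_eq) (auto simp: s4)
    show "upper_triangular U" unfolding upper_triangular_def U_def M4_def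
      by (auto dest!: less4 simp: numeral_2_eq_2 numeral_3_eq_3 less_Suc_eq)
    have PU: "P * U = M4 [[1,of_real a,2*of_real r,0],[1,-of_real a,0,0],[0,0,of_real b,of_real c],[0,0,of_real b,-of_real c]]"
      unfolding P_def U_def by (rule M4_mult_eq) (auto simp: s4)
    have "P * U * Q = M4 (map (map complex_of_real) [[p,q,r,r],[q,p,0,0],[0,0,x,y],[0,0,y,x]])"
      unfolding PU Q_def by (rule M4_mult_eq) (auto simp: s4 p_def q_def x_def y_def field_simps)
    then show "mat 4 4 (\<lambda>(i,j). complex_of_real (s i j)) = P * U * Q"
      by (auto simp: M4_def s_def intro!: eq_matI dest!: less4)
  qed (auto simp: U_def M4_def assms)
  then show ?thesis by (simp add: U_def M4_def)
qed

lemma caseK: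
  fixes a b c :: real
  assumes "0 \<le> 1+a+b+c" "0 \<le> 1-a+b-c" "0 \<le> 1+a-b-c" "0 \<le> 1-a-b+c" "a \<noteq> 0" "b \<noteq> 0" "c \<noteq> 0"
  shows "\<exists>T. lin_map4 T \<and> completely_positive4 T \<and> trace_preserving4 T \<and>
     filter_mset (\<lambda>z. z \<noteq> 0) (spec_mset4 T) = {#1, complex_of_real a, complex_of_real b, complex_of_real c#}"
proof -
  define t0 where "t0 = (1+a+b+c)/4"
  define t1 where "t1 = (1-a+b-c)/4"
  define t2 where "t2 = (1+a-b-c)/4"
  define t3 where "t3 = (1-a-b+c)/4"
  define s where "s i j = [[t0,t1,t2,t3],[t1,t0,t3,t2],[t2,t3,t0,t1],[t3,t2,t1,t0]] ! i ! j" for i j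
  define P :: "complex mat" where "P = M4 [[1,1,1,1],[1,-1,1,-1],[1,1,-1,-1],[1,-1,-1,1]]"
  define Q :: "complex mat" where "Q = M4 [[1/4,1/4,1/4,1/4],[1/4,-1/4,1/4,-1/4],[1/4,1/4,-1/4,-1/4],[1/4,-1/4,-1/4,1/4]]"
  define U :: "complex mat" where "U = M4 [[1,0,0,0],[0,of_real a,0,0],[0,0,of_real b,0],[0,0,0,of_real c]]"
  have "\<exists>T. lin_map4 T \<and> completely_positive4 T \<and> trace_preserving4 T \<and>
     filter_mset (\<lambda>z. z \<noteq> 0) (spec_mset4 T) = {#U$$(0,0), U$$(1,1), U$$(2,2), U$$(3,3)#}"
  proof (rule realize[of s P U Q])
    show "s i k \<ge> 0" if "i < 4" "k < 4" for i k
      using less4[OF that(1)] less4[OF that(2)] assms by (auto simp: s_def t0_def t1_def t2_def t3_def)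
    show "(\<Sum>i<4. s i j) = 1" if "j < 4" for j
      using less4[OF that] by (auto simp: s4 s_def t0_def t1_def t2_def t3_def field_simps)
    show "P \<in> carrier_mat 4 4" "U \<in> carrier_mat 4 4" "Q \<in> carrier_mat 4 4"
      by (simp_all add: P_def Q_def U_def M4_carrier)
    show "P * Q = 1\<^sub>m 4" unfolding P_def Q_def M4_one[symmetric]
      by (rule M4_mult_eq) (auto simp: s4)
    show "Q * P = 1\<^sub>m 4" unfolding P_def Q_def M4_one[symmetric]
      by (rule M4_mult_eq) (auto simp: s4)
    show "upper_triangular U" unfolding upper_triangular_def U_def M4_def
      by (auto dest!: less4 simp: numeral_2_eq_2 numeral_3_eq_3 less_Suc_eq)
    have PU: "P * U = M4 [[1,of_real a,of_real b,of_real c],[1,-of_real a,of_real b,-of_real c],[1,of_real a,-of_real b,-of_real c],[1,-of_real a,-of_real b,of_real c]]"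
      unfolding P_def U_def by (rule M4_mult_eq) (auto simp: s4)
    have "P * U * Q = M4 (map (map complex_of_real) [[t0,t1,t2,t3],[t1,t0,t3,t2],[t2,t3,t0,t1],[t3,t2,t1,t0]])"
      unfolding PU Q_def by (rule M4_mult_eq) (auto simp: s4 t0_def t1_def t2_def t3_def field_simps)
    then show "mat 4 4 (\<lambda>(i,j). complex_of_real (s i j)) = P * U * Q"
      by (auto simp: M4_def s_def intro!: eq_matI dest!: less4)
  qed (auto simp: U_def M4_def assms)
  then show ?thesis by (simp add: U_def M4_def)
qed

definition RR :: "real \<Rightarrow> real \<Rightarrow> real \<Rightarrow> bool" where
  "RR a b c \<longleftrightarrow> (\<exists>T. lin_map4 T \<and> completely_positive4 T \<and> trace_preserving4 T \<and>
     filter_mset (\<lambda>z. z \<noteq> 0) (spec_mset4 T) = {#1, complex_of_real a, complex_of_real b, complex_of_real c#})"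

lemma RR_perm: "RR a b c \<Longrightarrow> RR a c b" "RR a b c \<Longrightarrow> RR b a c"
  unfolding RR_def by (simp_all add: add_mset_commute)

lemma RR_all:
  assumes "\<bar>a\<bar> \<le> 1" "\<bar>b\<bar> \<le> 1" "\<bar>c\<bar> \<le> 1" "0 \<le> 1+a+b+c" "a \<noteq> 0" "b \<noteq> 0" "c \<noteq> 0"
  shows "RR a b c"
proof -
  have B: "RR x y z" if "\<bar>x\<bar> \<le> 1" "\<bar>y\<bar> \<le> 1" "\<bar>z\<bar> \<le> 1" "0 \<le> y + z" "x \<noteq> 0" "y \<noteq> 0" "z \<noteq> 0" for x y z
  proof (cases "z \<le> y")
    case True
    then show ?thesis using that caseB[of x z y] unfolding RR_def by auto
  next
    case False
    then have "RR x z y" using that caseB[of x y z] unfolding RR_def by auto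
    then show ?thesis by (rule RR_perm)
  qed
  show ?thesis
  proof (cases "0 \<le> b + c")
    case True then show ?thesis using B assms by blast
  next
    case F1: False
    show ?thesis
    proof (cases "0 \<le> a + c")
      case True then have "RR b a c" using B assms by blast
      then show ?thesis by (rule RR_perm)
    next
      case F2: False
      show ?thesis
      proof (cases "0 \<le> a + b")
        case True then have "RR c a b" using B assms by blast
        then have "RR a c b" by (rule RR_perm)
        then show ?thesis by (rule RR_perm)
      next
        case False
        then show ?thesis using F1 F2 assms caseK[of a b c] unfolding RR_def by auto
      qed
    qed
  qed
qed

theorem theorem6:
  fixes \<Lambda> :: "real multiset"
  assumes "size \<Lambda> = 4"
    and "0 \<notin># \<Lambda>"
    and "1 \<in># \<Lambda>"
    and "\<forall>x \<in># \<Lambda>. \<bar>x\<bar> \<le> 1"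
    and "sum_mset \<Lambda> \<ge> 0"
  shows "\<exists>T. lin_map4 T \<and> completely_positive4 T \<and> trace_preserving4 T \<and>
           filter_mset (\<lambda>z. z \<noteq> 0) (spec_mset4 T) = image_mset complex_of_real \<Lambda>"
proof -
  obtain L1 where L1: "\<Lambda> = add_mset 1 L1" using assms(3) by (metis mset_add)
  then have "size L1 = Suc (Suc (Suc 0))" using assms(1) by simp
  then obtain a L2 where L2: "L1 = add_mset a L2" using size_eq_Suc_imp_eq_union by metis
  then have "size L2 = Suc (Suc 0)" using \<open>size L1 = _\<close> by simp
  then obtain b L3 where L3: "L2 = add_mset b L3" using size_eq_Suc_imp_eq_union by metis
  then have "size L3 = Suc 0" using \<open>size L2 = _\<close> by simp
  then obtain c where L4: "L3 = {#c#}" using size_1_singleton_mset by (metis One_nat_def)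
  have Le: "\<Lambda> = {#1, a, b, c#}" using L1 L2 L3 L4 by simp
  have "RR a b c" by (rule RR_all) (use assms Le in \<open>auto simp: add_ac\<close>)
  then show ?thesis unfolding RR_def Le by simp
qed


end
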